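(* Let $\beta>0$ and $\alpha>0$, and define $f:[0,1]\to\mathbb{R}$ by $f(k)=\alpha k(1-k)^{\beta}$. If $$\left(\frac{\beta+1}{\beta}\right)^{\beta}<\alpha\leq(\beta+1)\left(\frac{\beta+1}{\beta}\right)^{\beta},$$ then $f$ maps $[0,1]$ into itself and $f\in\mathfrak{G}$ (with $[a,b]=[0,1]$).
   Context: $\mathfrak{G}$ denotes the set of continuous maps $g$ from a closed interval $[a,b]$ into itself satisfying: (1) there exists $m\in(a,b)$ such that $g$ is strictly increasing on $[a,m]$ and strictly decreasing on $[m,b]$; (2) $g(a)\geq a$, $g(b)<b$, and $g(x)>x$ for all $x\in(a,m]$. *)

theory Defs
  imports "HOL-Analysis.Analysis"
begin

definition in_class_G :: "(real \<Rightarrow> real) \<Rightarrow> real \<Rightarrow> real \<Rightarrow> bool" where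
  "in_class_G g a b \<longleftrightarrow>
     a < b \<and> continuous_on {a..b} g \<and> g ` {a..b} \<subseteq> {a..b} \<and>
     (\<exists>m. a < m \<and> m < b \<and>
        strict_mono_on {a..m} g \<and> strict_antimono_on {m..b} g \<and>
        g a \<ge> a \<and> g b < b \<and> (\<forall>x\<in>{a<..m}. g x > x))"

end

theory Submission
  imports Defs
begin

theorem lemma2p1:
  fixes \<alpha> \<beta> :: real
  assumes "\<beta> > 0" and "\<alpha> > 0"
    and "((\<beta> + 1) / \<beta>) powr \<beta> < \<alpha>"
    and "\<alpha> \<le> (\<beta> + 1) * ((\<beta> + 1) / \<beta>) powr \<beta>"
  defines "f \<equiv> (\<lambda>k::real. \<alpha> * k * (1 - k) powr \<beta>)"
  shows "f ` {0..1} \<subseteq> {0..1} \<and> in_class_G f 0 1"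
proof -
  note b = assms(1) and a = assms(2)
  define m where "m = 1 / (\<beta> + 1)"
  have m0: "0 < m" "m < 1" using b by (auto simp: m_def)
  have cont: "continuous_on {0..1} f" unfolding f_def
    by (intro continuous_intros continuous_on_powr') (use b in auto)
  have der: "DERIV f x :> \<alpha> * (1 - x) powr (\<beta> - 1) * (1 - (\<beta> + 1) * x)"
    if "0 < x" "x < 1" for x
  proof -
    have d1: "DERIV (\<lambda>k. 1 - k) x :> -1"
      by (auto intro!: derivative_eq_intros)
    have d2: "DERIV (\<lambda>k. (1 - k) powr \<beta>) x :> \<beta> * (1 - x) powr (\<beta> - of_nat 1) * -1"
      using DERIV_fun_powr[OF d1] that by simp
    have d3: "DERIV f x :> \<alpha> * (1 - x) powr \<beta> + \<alpha> * x * (\<beta> * (1 - x) powr (\<beta> - of_nat 1) * -1)"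
      unfolding f_def
      by (rule derivative_eq_intros refl d2 | simp)+
    have e: "(1 - x) powr \<beta> = (1 - x) * (1 - x) powr (\<beta> - 1)"
      using that by (simp add: powr_mult_base)
    show ?thesis using d3 unfolding e by (simp add: algebra_simps)
  qed
  have contsub: "continuous_on {x..y} f" if "0 \<le> x" "y \<le> 1" for x y
    using continuous_on_subset[OF cont] that by auto
  have mono: "strict_mono_on {0..m} f"
  proof (rule strict_mono_onI)
    fix x y assume xy: "x \<in> {0..m}" "y \<in> {0..m}" "x < y"
    show "f x < f y"
    proof (rule DERIV_pos_imp_increasing_open[OF xy(3)])
      fix t assume t: "x < t" "t < y"
      have "0 < t" "t < 1" "t < m" using t xy m0 by auto
      moreover have "(\<beta> + 1) * t < 1" using \<open>t < m\<close> b by (simp add: m_def field_simps)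
      ultimately show "\<exists>z. DERIV f t :> z \<and> z > 0"
        using der a by (intro exI[of _ "\<alpha> * (1 - t) powr (\<beta> - 1) * (1 - (\<beta> + 1) * t)"]) auto
    next
      show "continuous_on {x..y} f" using xy m0 by (intro contsub) auto
    qed
  qed
  have anti: "strict_antimono_on {m..1} f"
  proof (rule monotone_onI)
    fix x y assume xy: "x \<in> {m..1}" "y \<in> {m..1}" "x < y"
    show "f y < f x"
    proof (rule DERIV_neg_imp_decreasing_open[OF xy(3)])
      fix t assume t: "x < t" "t < y"
      have "0 < t" "t < 1" "m < t" using t xy m0 by auto
      moreover have "(\<beta> + 1) * t > 1" using \<open>m < t\<close> b by (simp add: m_def field_simps)
      ultimately show "\<exists>z. DERIV f t :> z \<and> z < 0"
        using der a by (intro exI[of _ "\<alpha> * (1 - t) powr (\<beta> - 1) * (1 - (\<beta> + 1) * t)"])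
          (auto simp: mult_pos_neg)
    next
      show "continuous_on {x..y} f" using xy m0 by (intro contsub) auto
    qed
  qed
  define P where "P = ((\<beta> + 1) / \<beta>) powr \<beta>"
  define Q where "Q = (\<beta> / (\<beta> + 1)) powr \<beta>"
  have PQ: "P * Q = 1" unfolding P_def Q_def using b
    by (simp add: powr_mult[symmetric])
  have Qpos: "Q > 0" unfolding Q_def using b by simp
  have m1: "1 - m = \<beta> / (\<beta> + 1)" using b by (simp add: m_def field_simps)
  have fm: "f m = \<alpha> / (\<beta> + 1) * Q" unfolding f_def Q_def m1 by (simp add: m_def)
  have fm1: "f m \<le> 1"
  proof -
    have "\<alpha> / (\<beta> + 1) \<le> P" using assms(4) b unfolding P_def by (simp add: field_simps)
    hence "\<alpha> / (\<beta> + 1) * Q \<le> P * Q" using Qpos by (intro mult_right_mono) auto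
    thus ?thesis using fm PQ by simp
  qed
  have img: "f ` {0..1} \<subseteq> {0..1}"
  proof
    fix y assume "y \<in> f ` {0..1}"
    then obtain x where x: "x \<in> {0..1}" "y = f x" by auto
    have "f x \<ge> 0" using x a unfolding f_def by simp
    moreover have "f x \<le> f m"
    proof (cases "x \<le> m")
      case True
      show ?thesis
      proof (cases "x = m")
        case False
        hence "x < m" using True by simp
        have h1: "x \<in> {0..m}" "m \<in> {0..m}" using x True m0 by auto
        show ?thesis using strict_mono_onD[OF mono h1 \<open>x < m\<close>] by (rule less_imp_le)
      next case True thus ?thesis by simp qed
    next
      case False
      hence "m < x" by simp
      have h2: "m \<in> {m..1}" "x \<in> {m..1}" using x \<open>m < x\<close> m0 by auto
      show ?thesis using monotone_onD[OF anti h2 \<open>m < x\<close>] by (rule less_imp_le)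
    qed
    ultimately show "y \<in> {0..1}" using x fm1 by auto
  qed
  have above: "f x > x" if x: "x \<in> {0<..m}" for x
  proof -
    have "(1 - m) powr \<beta> \<le> (1 - x) powr \<beta>"
      using x m0 b by (intro powr_mono2) auto
    hence "Q \<le> (1 - x) powr \<beta>" unfolding m1 Q_def .
    moreover have "\<alpha> * Q > 1" using assms(3) Qpos PQ unfolding P_def[symmetric]
      by (metis mult_strict_right_mono)
    ultimately have "\<alpha> * (1 - x) powr \<beta> > 1" using a
      by (smt (verit, best) mult_left_mono)
    hence "x * 1 < x * (\<alpha> * (1 - x) powr \<beta>)" using x by (intro mult_strict_left_mono) auto
    thus ?thesis unfolding f_def by (simp add: mult.assoc mult.left_commute)
  qed
  have "f 0 \<ge> 0" "f 1 < 1" unfolding f_def using b by auto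
  hence "\<exists>m. 0 < m \<and> m < 1 \<and> strict_mono_on {0..m} f \<and> strict_antimono_on {m..1} f \<and>
        f 0 \<ge> 0 \<and> f 1 < 1 \<and> (\<forall>x\<in>{0<..m}. f x > x)"
    using mono anti above m0 by (intro exI[of _ m]) simp
  thus ?thesis using img cont unfolding in_class_G_def by simp
qed

end
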